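(* Let $d\ge 1$ and let $j\in L^1(\mathbb{R}^d)$ be given by $j(x)=(2\pi)^{-d}\int_{\mathbb{R}^d}e^{ix\cdot t}\,d\rho(t)$ for a finite positive Borel measure $\rho$ on $\mathbb{R}^d$, and let $J$ be the integral operator on $L^2(\mathbb{R}^d)$ with kernel $J(x,y)=j(x-y)$. Let $\Lambda\subset\mathbb{R}^d$ be a bounded Borel set, let $\zeta_\Lambda\in\Gamma_\Lambda$ and $\xi\in\mathcal{R}_\Lambda$. Then the limit $$H_\Lambda^{(J)}(\zeta_\Lambda;\xi):=\lim_{\Delta\uparrow\mathbb{R}^d}\big[U^{(J)}(\zeta_\Lambda)+W^{(J)}(\zeta_\Lambda;\widehat\xi_{\Delta\setminus\Lambda})\big],$$ taken over bounded Borel sets $\Delta\supset\Lambda$ increasing to $\mathbb{R}^d$, exists (in $\mathbb{R}\cup\{+\infty\}$).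
   Context: Configurations: $\mathcal{N}$ is the space of locally finite integer-valued Radon measures on $\mathbb{R}^d$; $\Gamma\subset\mathcal{N}$ is the set of simple ones, identified with locally finite subsets of $\mathbb{R}^d$. For $\Lambda\subset\mathbb{R}^d$, $\xi_\Lambda=\xi\cap\Lambda$ is the restriction, and $\Gamma_\Lambda$ is the set of simple configurations supported in $\Lambda$ (finite when $\Lambda$ is bounded). For a finite tuple or configuration $\underline x_n=(x_1,\dots,x_n)$, $J(\underline x_n,\underline x_n)$ denotes the matrix $(j(x_i-x_k))_{1\le i,k\le n}$, which is positive semidefinite. Potential: $U^{(J)}(x_1,\dots,x_n):=-\log\det(j(x_i-x_k))_{1\le i,k\le n}$, with $-\log 0:=+\infty$ and $U^{(J)}(\emptyset)=0$. For disjoint finite configurations $\xi_1,\xi_2$, the mutual energy is $W^{(J)}(\xi_1;\xi_2):=U^{(J)}(\xi_1\cup\xi_2)-U^{(J)}(\xi_1)-U^{(J)}(\xi_2)$ if $U^{(J)}(\xi_1\cup\xi_2)<\infty$. In that case $U^{(J)}(\xi_1)$ and $U^{(J)}(\xi_2)$ are finite by Fischer's inequality. Otherwise $W^{(J)}(\xi_1;\xi_2):=+\infty$. Interaction range: $R:=\inf\{R'>0: j(x)=0\text{ whenever }|x|\ge R'\}\in(0,+\infty]$. Boundary particles: if $R=\infty$, $\xi_{\partial\Lambda}:=\xi_{\Lambda^c}$. If $R<\infty$, $\xi_{\partial\Lambda}$ is the set of $x\in\xi_{\Lambda^c}$ for which there exist points $x_{j_1},\dots,x_{j_k}\in\xi_{\Lambda^c}$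 with $x_{j_k}=x$ and a point $x_{j_0}\in\Lambda$ such that $|x_{j_l}-x_{j_{l-1}}|<R$ for $l=1,\dots,k$. For bounded $\Delta$, $\widehat\xi_\Delta:=\xi_\Delta\cap\xi_{\partial\Lambda}$. Possible boundary conditions: $\mathcal{R}_\Lambda:=\{\xi\in\mathcal{N}:\det J(\widehat\xi_\Delta,\widehat\xi_\Delta)\neq0\text{ for all bounded }\Delta\subset\Lambda^c\}$. *)

theory Defs
  imports "HOL-Analysis.Analysis" "HOL-Library.Multiset" "HOL-Library.Extended_Real"
    "Jordan_Normal_Form.Determinant"
begin

text \<open>A general configuration in N
  (locally finite integer-valued Radon measure) is represented by its multiplicity
  function; finite configurations are finite multisets.\<close>

definition locally_finite_config :: "('a::metric_space \<Rightarrow> nat) \<Rightarrow> bool" where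
  "locally_finite_config \<xi> \<longleftrightarrow> (\<forall>B. bounded B \<longrightarrow> finite {x\<in>B. 0 < \<xi> x})"

text \<open>Restriction of a configuration to a set S, as a finite multiset
  (meaningful when only finitely many points of the configuration lie in S).\<close>
definition restr_config :: "('a \<Rightarrow> nat) \<Rightarrow> 'a set \<Rightarrow> 'a multiset" where
  "restr_config \<xi> S = (\<Sum>x\<in>{x\<in>S. 0 < \<xi> x}. replicate_mset (\<xi> x) x)"

definition Jmat :: "('a::ab_group_add \<Rightarrow> complex) \<Rightarrow> 'a list \<Rightarrow> complex mat" where
  "Jmat j xs = Matrix.mat (length xs) (length xs) (\<lambda>(i,k). j (xs ! i - xs ! k))"

text \<open>Determinant of J on a finite configuration (with multiplicities); it does not
  depend on the chosen enumeration.\<close>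
definition detJ :: "('a::ab_group_add \<Rightarrow> complex) \<Rightarrow> 'a multiset \<Rightarrow> complex" where
  "detJ j M = Determinant.det (Jmat j (SOME xs. mset xs = M))"

text \<open>U^(J)(x_1..x_n) = - log det (j(x_i-x_k)), with -log 0 = +infinity and U(empty)=0.
  The determinant is real and nonnegative (positive semidefinite Hermitian matrix), so
  it equals its modulus.\<close>
definition U_J :: "('a::ab_group_add \<Rightarrow> complex) \<Rightarrow> 'a multiset \<Rightarrow> ereal" where
  "U_J j M = (if detJ j M = 0 then \<infinity> else ereal (- ln (cmod (detJ j M))))"

definition W_J :: "('a::ab_group_add \<Rightarrow> complex) \<Rightarrow> 'a multiset \<Rightarrow> 'a multiset \<Rightarrow> ereal" where
  "W_J j M1 M2 = (if U_J j (M1 + M2) < \<infinity> then U_J j (M1 + M2) - U_J j M1 - U_J j M2 else \<infinity>)"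

definition interaction_range :: "('a::real_normed_vector \<Rightarrow> complex) \<Rightarrow> ereal" where
  "interaction_range j = Inf (ereal ` {R'. R' > 0 \<and> (\<forall>x. norm x \<ge> R' \<longrightarrow> j x = 0)})"

definition boundary_pts ::
  "('a::real_normed_vector \<Rightarrow> complex) \<Rightarrow> 'a set \<Rightarrow> ('a \<Rightarrow> nat) \<Rightarrow> 'a set" where
  "boundary_pts j \<Lambda> \<xi> =
     (let P = {x. x \<notin> \<Lambda> \<and> 0 < \<xi> x}; R = interaction_range j in
      if R = \<infinity> then P
      else {x\<in>P. \<exists>y\<in>\<Lambda>. \<exists>z\<in>P. ereal (dist y z) < R \<and>
               (z, x) \<in> {(a, b). a \<in> P \<and> b \<in> P \<and> ereal (dist a b) < R}\<^sup>*})"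

definition xi_hat ::
  "('a::real_normed_vector \<Rightarrow> complex) \<Rightarrow> 'a set \<Rightarrow> ('a \<Rightarrow> nat) \<Rightarrow> 'a set \<Rightarrow> 'a multiset" where
  "xi_hat j \<Lambda> \<xi> \<Delta> = restr_config \<xi> (\<Delta> \<inter> boundary_pts j \<Lambda> \<xi>)"

definition possible_bc ::
  "('a::real_normed_vector \<Rightarrow> complex) \<Rightarrow> 'a set \<Rightarrow> ('a \<Rightarrow> nat) set" where
  "possible_bc j \<Lambda> = {\<xi>. locally_finite_config \<xi> \<and>
      (\<forall>\<Delta>. bounded \<Delta> \<and> \<Delta> \<subseteq> - \<Lambda> \<longrightarrow> detJ j (xi_hat j \<Lambda> \<xi> \<Delta>) \<noteq> 0)}"

definition incr_to_univ :: "'a::euclidean_space set \<Rightarrow> 'a set filter" where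
  "incr_to_univ \<Lambda> = (INF \<Delta>0\<in>{\<Delta>. bounded \<Delta> \<and> \<Delta> \<in> sets borel \<and> \<Lambda> \<subseteq> \<Delta>}.
      principal {\<Delta>. bounded \<Delta> \<and> \<Delta> \<in> sets borel \<and> \<Delta>0 \<subseteq> \<Delta>})"

end

theory Submission
  imports Defs "HOL-Combinatorics.Permutations"
begin
definition Bf :: "('a::ab_group_add \<Rightarrow> complex) \<Rightarrow> (complex \<times> 'a) list \<Rightarrow> (complex \<times> 'a) list \<Rightarrow> complex" where
  "Bf j L1 L2 = (\<Sum>p\<leftarrow>L1. \<Sum>q\<leftarrow>L2. cnj (fst p) * fst q * j (snd p - snd q))"

definition herm :: "('a::ab_group_add \<Rightarrow> complex) \<Rightarrow> bool" where
  "herm j \<longleftrightarrow> (\<forall>x. j (-x) = cnj (j x))"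

definition psd :: "('a::ab_group_add \<Rightarrow> complex) \<Rightarrow> bool" where
  "psd j \<longleftrightarrow> (\<forall>L. Bf j L L \<in> \<real> \<and> 0 \<le> Re (Bf j L L))"

definition sc :: "complex \<Rightarrow> (complex \<times> 'a) list \<Rightarrow> (complex \<times> 'a) list" where
  "sc a L = map (\<lambda>p. (a * fst p, snd p)) L"

lemma Bf_Nil1[simp]: "Bf j [] L = 0" and Bf_Nil2[simp]: "Bf j L [] = 0"
  by (simp_all add: Bf_def)

lemma Bf_Cons1: "Bf j (p#L1) L2 = cnj (fst p) * (\<Sum>q\<leftarrow>L2. fst q * j (snd p - snd q)) + Bf j L1 L2"
  by (simp add: Bf_def sum_list_const_mult mult.assoc)

lemma Bf_append1: "Bf j (L1@L2) L = Bf j L1 L + Bf j L2 L"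
  by (simp add: Bf_def)

lemma Bf_append2: "Bf j L (L1@L2) = Bf j L L1 + Bf j L L2"
  by (simp add: Bf_def sum_list_addf)

lemma Bf_Cons2: "Bf j L (q#L2) = (\<Sum>p\<leftarrow>L. cnj (fst p) * fst q * j (snd p - snd q)) + Bf j L L2"
  using Bf_append2[of j L "[q]" L2] by (simp add: Bf_def)

lemma cnj_sum_list: "cnj (sum_list (map f xs)) = sum_list (map (\<lambda>x. cnj (f x)) xs)"
  by (induction xs) auto

lemma Bf_sym: assumes "herm j" shows "Bf j L2 L1 = cnj (Bf j L1 L2)"
proof (induction L1)
  case Nil then show ?case by simp
next
  case (Cons p L1)
  have h: "\<And>a b. cnj (j (a - b)) = j (b - a)" using assms unfolding herm_def
    by (metis complex_cnj_cnj minus_diff_eq)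
  have "cnj (Bf j (p#L1) L2) = fst p * (\<Sum>q\<leftarrow>L2. cnj (fst q) * j (snd q - snd p)) + cnj (Bf j L1 L2)"
    by (simp add: Bf_Cons1 cnj_sum_list h)
  also have "\<dots> = Bf j L2 (p#L1)"
  proof -
    have "fst p * (\<Sum>q\<leftarrow>L2. cnj (fst q) * j (snd q - snd p)) = (\<Sum>q\<leftarrow>L2. fst p * (cnj (fst q) * j (snd q - snd p)))"
      by (simp add: sum_list_const_mult)
    also have "\<dots> = (\<Sum>q\<leftarrow>L2. cnj (fst q) * fst p * j (snd q - snd p))"
      by (simp add: ac_simps)
    finally show ?thesis using Cons by (simp add: Bf_Cons2)
  qed
  finally show ?case by simp
qed

lemma Bf_sc1: "Bf j (sc a L1) L2 = cnj a * Bf j L1 L2"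
proof -
  have "Bf j (sc a L1) L2 = (\<Sum>p\<leftarrow>L1. \<Sum>q\<leftarrow>L2. cnj a * (cnj (fst p) * fst q * j (snd p - snd q)))"
    by (simp add: Bf_def sc_def o_def ac_simps)
  also have "\<dots> = cnj a * Bf j L1 L2" by (simp add: Bf_def sum_list_const_mult)
  finally show ?thesis .
qed

lemma Bf_sc2: "Bf j L1 (sc a L2) = a * Bf j L1 L2"
proof -
  have "Bf j L1 (sc a L2) = (\<Sum>p\<leftarrow>L1. \<Sum>q\<leftarrow>L2. a * (cnj (fst p) * fst q * j (snd p - snd q)))"
    by (simp add: Bf_def sc_def o_def ac_simps)
  also have "\<dots> = a * Bf j L1 L2" by (simp add: Bf_def sum_list_const_mult)
  finally show ?thesis .
qed

lemma Bf_single: "Bf j [(1,x)] D = (\<Sum>q\<leftarrow>D. fst q * j (x - snd q))"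
  unfolding Bf_def by simp

lemma Bf_left_expand: "Bf j E D = (\<Sum>p\<leftarrow>E. cnj (fst p) * Bf j [(1, snd p)] D)"
proof (induction E)
  case Nil then show ?case by simp
next
  case (Cons p E)
  show ?case unfolding Bf_Cons1[of j p E] Cons Bf_single by simp
qed

lemma Bf_left_zero:
  assumes "\<And>y. y \<in> snd ` set E \<Longrightarrow> Bf j [(1,y)] D = 0"
  shows "Bf j E D = 0"
  apply (rule trans[OF Bf_left_expand])
  using assms by (induction E) auto

lemma psd_real: "psd j \<Longrightarrow> Bf j L L = complex_of_real (Re (Bf j L L))"
  unfolding psd_def by (simp add: complex_is_Real_iff complex_eq_iff)

lemma psd_orth:
  assumes "psd j" "herm j" "Bf j L L = 0"
  shows "Bf j U L = 0"
proof -
  define \<beta> where "\<beta> = Bf j U L"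
  define Q where "Q = Re (Bf j U U)"
  have Q0: "Q \<ge> 0" using assms(1) unfolding psd_def Q_def by auto
  define s :: real where "s = 1 / (Q + 1)"
  have s0: "s > 0" using Q0 by (simp add: s_def)
  have sQ: "s * Q < 1" using Q0 by (simp add: s_def field_simps)
  define \<alpha> where "\<alpha> = - complex_of_real s * \<beta>"
  define X where "X = L @ sc \<alpha> U"
  have LU: "Bf j L U = cnj \<beta>" unfolding \<beta>_def by (rule Bf_sym[OF assms(2)])
  have e1: "Bf j X X = Bf j L L + \<alpha> * Bf j L U + cnj \<alpha> * Bf j U L + cnj \<alpha> * \<alpha> * Bf j U U"
    unfolding X_def Bf_append1 Bf_append2 Bf_sc1 Bf_sc2 by (simp add: algebra_simps)
  have bb: "\<beta> * cnj \<beta> = complex_of_real ((cmod \<beta>)\<^sup>2)" using complex_norm_square[of \<beta>] by simp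
  have t1: "\<alpha> * cnj \<beta> = complex_of_real (- s * (cmod \<beta>)\<^sup>2)"
    unfolding \<alpha>_def using bb by (simp add: mult.assoc)
  have t2: "cnj \<alpha> * \<beta> = complex_of_real (- s * (cmod \<beta>)\<^sup>2)"
    unfolding \<alpha>_def using bb by (simp add: mult.commute mult.left_commute)
  have t3: "cnj \<alpha> * \<alpha> = complex_of_real (s^2 * (cmod \<beta>)\<^sup>2)"
    unfolding \<alpha>_def using bb by (simp add: power2_eq_square mult.commute mult.left_commute)
  have t4: "Bf j U U = complex_of_real Q" unfolding Q_def by (rule psd_real[OF assms(1)])
  have "Bf j X X = complex_of_real (-2 * s * (cmod \<beta>)\<^sup>2 + s^2 * (cmod \<beta>)\<^sup>2 * Q)"
  proof -
    have "Bf j X X = \<alpha> * cnj \<beta> + cnj \<alpha> * \<beta> + cnj \<alpha> * \<alpha> * complex_of_real Q"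
      unfolding e1 assms(3) LU t4 \<beta>_def by simp
    also have "\<dots> = complex_of_real (- s * (cmod \<beta>)\<^sup>2 + - s * (cmod \<beta>)\<^sup>2 + s^2 * (cmod \<beta>)\<^sup>2 * Q)"
      unfolding t1 t2 t3 by simp
    finally show ?thesis by simp
  qed
  hence "Re (Bf j X X) = -2 * s * (cmod \<beta>)\<^sup>2 + s^2 * (cmod \<beta>)\<^sup>2 * Q" by simp
  moreover have "0 \<le> Re (Bf j X X)" using assms(1) unfolding psd_def by blast
  ultimately have "0 \<le> -2 * s * (cmod \<beta>)\<^sup>2 + s^2 * (cmod \<beta>)\<^sup>2 * Q" by simp
  hence "0 \<le> s * (cmod \<beta>)\<^sup>2 * (s * Q - 2)" by (simp add: algebra_simps power2_eq_square)
  moreover have "s * Q - 2 < 0" using sQ by simp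
  ultimately have "s * (cmod \<beta>)\<^sup>2 \<le> 0"
    by (metis mult_less_0_iff not_le zero_le_mult_iff)
  hence "(cmod \<beta>)\<^sup>2 \<le> 0" using s0 by (simp add: mult_le_0_iff)
  hence "cmod \<beta> = 0" by simp
  thus ?thesis unfolding \<beta>_def by simp
qed

definition LV :: "complex vec \<Rightarrow> 'a list \<Rightarrow> (complex \<times> 'a) list" where
  "LV v xs = map (\<lambda>i. (v $ i, xs ! i)) [0..<length xs]"

definition rr :: "('a::ab_group_add \<Rightarrow> complex) \<Rightarrow> 'a set \<Rightarrow> 'a \<Rightarrow> real" where
  "rr j F w = Inf {Re (Bf j ((1,w)#ps) ((1,w)#ps)) | ps. snd ` set ps \<subseteq> F}"

lemma Jmat_carrier[simp]: "Jmat j xs \<in> carrier_mat (length xs) (length xs)"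
  by (simp add: Jmat_def)

lemma Jmat_dims[simp]: "dim_row (Jmat j xs) = length xs" "dim_col (Jmat j xs) = length xs"
  by (simp_all add: Jmat_def)

lemma Jmat_index[simp]: "i < length xs \<Longrightarrow> k < length xs \<Longrightarrow> Jmat j xs $$ (i,k) = j (xs!i - xs!k)"
  by (simp add: Jmat_def)

lemma LV_set: "snd ` set (LV v xs) = set xs"
  by (force simp: LV_def in_set_conv_nth image_iff)

lemma Bf_LV: "Bf j [(1,x)] (LV v xs) = (\<Sum>k=0..<length xs. v $ k * j (x - xs!k))"
  unfolding Bf_single LV_def by (simp add: o_def interv_sum_list_conv_sum_set_nat)

lemma Jmat_mult_vec:
  assumes "i < length xs" "v \<in> carrier_vec (length xs)"
  shows "(Jmat j xs *\<^sub>v v) $ i = Bf j [(1, xs!i)] (LV v xs)"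
  unfolding Bf_LV using assms
  by (auto simp: scalar_prod_def mult.commute intro!: sum.cong)

lemma rr_nonneg: assumes "psd j" shows "0 \<le> rr j F w"
  unfolding rr_def
proof (rule cInf_greatest)
  show "{Re (Bf j ((1, w) # ps) ((1, w) # ps)) |ps. snd ` set ps \<subseteq> F} \<noteq> {}"
    by (auto intro!: exI[of _ "[]"])
qed (use assms in \<open>auto simp: psd_def\<close>)

lemma rr_mono: assumes "psd j" "F \<subseteq> G" shows "rr j G w \<le> rr j F w"
  unfolding rr_def
proof (rule cInf_superset_mono)
  show "{Re (Bf j ((1, w) # ps) ((1, w) # ps)) |ps. snd ` set ps \<subseteq> F} \<noteq> {}" by (auto intro!: exI[of _ "[]"])
  show "bdd_below {Re (Bf j ((1, w) # ps) ((1, w) # ps)) |ps. snd ` set ps \<subseteq> G}"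
    using assms(1) unfolding psd_def by (intro bdd_belowI[of _ 0]) auto
qed (use assms(2) in auto)

lemma LV_snoc: assumes "v' \<in> carrier_vec (Suc (length xs))"
  shows "LV v' (xs@[w]) = LV (vec (length xs) (\<lambda>i. v' $ i)) xs @ [(v' $ length xs, w)]"
  unfolding LV_def by (auto simp: nth_append)

lemma Bf_single_snoc: "Bf j [(1,x)] (L @ [(a,w)]) = Bf j [(1,x)] L + a * j (x - w)"
  by (simp add: Bf_append2 Bf_def)

lemma Jmat_snoc_index:
  "i < Suc (length xs) \<Longrightarrow> (xs@[w]) ! i = (if i < length xs then xs!i else w)"
  by (auto simp: nth_append)

lemma det_zero_case:
  assumes "psd j" "herm j" "det (Jmat j xs) = 0"
  shows "det (Jmat j (xs@[w])) = 0"
proof -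
  let ?n = "length xs"
  obtain v where v: "v \<in> carrier_vec ?n" "v \<noteq> 0\<^sub>v ?n" "Jmat j xs *\<^sub>v v = 0\<^sub>v ?n"
    using det_0_iff_vec_prod_zero_field[OF Jmat_carrier] assms(3) by blast
  have z: "Bf j [(1, xs!i)] (LV v xs) = 0" if "i < ?n" for i
    using Jmat_mult_vec[OF that v(1), of j] v(3) that by simp
  have "Bf j (LV v xs) (LV v xs) = 0"
    by (rule Bf_left_zero) (use z in \<open>auto simp: LV_set in_set_conv_nth\<close>)
  hence zz: "\<And>U. Bf j U (LV v xs) = 0" using psd_orth assms by blast
  define v' where "v' = vec (Suc ?n) (\<lambda>i. if i < ?n then v $ i else 0)"
  have v'c: "v' \<in> carrier_vec (Suc ?n)" by (simp add: v'_def)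
  have vv: "vec ?n (\<lambda>i. v' $ i) = v" using v(1) by (auto simp: v'_def)
  have LVv': "LV v' (xs@[w]) = LV v xs @ [(0, w)]"
    using LV_snoc[OF v'c, of w] vv by (simp add: v'_def)
  have "Jmat j (xs@[w]) *\<^sub>v v' = 0\<^sub>v (Suc ?n)"
  proof (rule eq_vecI)
    fix i assume i: "i < dim_vec (0\<^sub>v (Suc ?n) :: complex vec)"
    hence i': "i < length (xs@[w])" by simp
    show "(Jmat j (xs@[w]) *\<^sub>v v') $ i = 0\<^sub>v (Suc ?n) $ i"
      using Jmat_mult_vec[OF i', of v' j] v'c i
      by (simp add: LVv' Bf_single_snoc zz)
  qed (simp)
  moreover have "v' \<noteq> 0\<^sub>v (Suc ?n)"
  proof
    assume "v' = 0\<^sub>v (Suc ?n)"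
    hence "\<forall>i<Suc ?n. (if i < ?n then v $ i else 0) = 0" unfolding v'_def by (auto simp: vec_eq_iff)
    hence "v = 0\<^sub>v ?n" using v(1) by (intro eq_vecI) (auto, metis less_SucI)
    thus False using v(2) by simp
  qed
  ultimately show ?thesis
    using det_0_iff_vec_prod_zero_field[OF Jmat_carrier, of j "xs@[w]"] v'c by auto
qed

lemma det_nonzero_case:
  assumes psd: "psd j" and hm: "herm j" and dN: "det (Jmat j xs) \<noteq> 0"
  shows "det (Jmat j (xs@[w])) = det (Jmat j xs) * complex_of_real (rr j (set xs) w)"
proof -
  let ?n = "length xs"
  let ?N = "Jmat j xs"
  let ?M = "Jmat j (xs@[w])"
  have "?N \<in> Units (ring_mat TYPE(complex) ?n ())"
    by (rule det_non_zero_imp_unit[OF Jmat_carrier dN])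
  then obtain B where B: "B \<in> carrier_mat ?n ?n" "?N * B = 1\<^sub>m ?n"
    unfolding Units_def ring_mat_def by auto
  define bv where "bv = vec ?n (\<lambda>k. j (xs!k - w))"
  define c where "c = B *\<^sub>v bv"
  have cc: "c \<in> carrier_vec ?n" using B(1) by (simp add: c_def bv_def)
  have Nc: "?N *\<^sub>v c = bv"
  proof -
    have "?N *\<^sub>v c = (?N * B) *\<^sub>v bv" unfolding c_def
      by (rule assoc_mult_mat_vec[symmetric, OF Jmat_carrier B(1)]) (simp add: bv_def)
    also have "\<dots> = bv" unfolding B(2) by (simp add: bv_def)
    finally show ?thesis .
  qed
  have hc: "Bf j [(1, xs!k)] (LV c xs) = j (xs!k - w)" if "k < ?n" for k
    using Jmat_mult_vec[OF that cc, of j] Nc that by (simp add: bv_def)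
  define V where "V = LV c xs"
  define W :: "(complex \<times> _) list" where "W = [(1,w)]"
  define D where "D = W @ sc (-1) V"
  have WV: "snd ` set V = set xs" unfolding V_def by (rule LV_set)
  have sV: "snd ` set (sc a V) = set xs" for a using WV by (force simp: sc_def image_iff)
  have BD1: "Bf j [(1,y)] D = j (y - w) - Bf j [(1,y)] V" for y
    unfolding D_def W_def Bf_append2 Bf_sc2 by (simp add: Bf_def)
  have orth: "Bf j [(1,y)] D = 0" if "y \<in> set xs" for y
  proof -
    from that obtain k where "k < ?n" "y = xs!k" by (auto simp: in_set_conv_nth)
    thus ?thesis using BD1 hc V_def by simp
  qed
  have orthE: "Bf j E D = 0" if "snd ` set E \<subseteq> set xs" for E
    by (rule Bf_left_zero) (use orth that in auto)
  have orthE': "Bf j D E = 0" if "snd ` set E \<subseteq> set xs" for E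
    using Bf_sym[OF hm, of E D] orthE[OF that] by simp
  have val: "Bf j D D = Bf j W D"
    using orthE[of "sc (-1) V"] sV unfolding D_def[of] Bf_append1 by simp
  have mini: "Re (Bf j D D) \<le> Re (Bf j ((1,w)#ps) ((1,w)#ps))" if ps: "snd ` set ps \<subseteq> set xs" for ps
  proof -
    define F where "F = ps @ V"
    have Fs: "snd ` set F \<subseteq> set xs" using ps WV by (auto simp: F_def)
    have e: "Bf j ((1,w)#ps) ((1,w)#ps) = Bf j (D@F) (D@F)"
    proof -
      have "Bf j ((1,w)#ps) ((1,w)#ps) = Bf j (W @ ps) (W @ ps)" by (simp add: W_def)
      also have "\<dots> = Bf j (D@F) (D@F)" unfolding D_def F_def
        by (simp add: Bf_append1 Bf_append2 Bf_sc1 Bf_sc2 algebra_simps)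
      finally show ?thesis .
    qed
    also have "\<dots> = Bf j D D + Bf j F F"
      unfolding Bf_append1 Bf_append2 using orthE[OF Fs] orthE'[OF Fs] by simp
    finally have "Re (Bf j ((1,w)#ps) ((1,w)#ps)) = Re (Bf j D D) + Re (Bf j F F)" by simp
    moreover have "0 \<le> Re (Bf j F F)" using psd unfolding psd_def by blast
    ultimately show ?thesis by simp
  qed
  have Dform: "D = (1,w) # sc (-1) V" by (simp add: D_def W_def)
  have rrv: "rr j (set xs) w = Re (Bf j D D)"
    unfolding rr_def
  proof (rule cInf_eq_minimum)
    show "Re (Bf j D D) \<in> {Re (Bf j ((1, w) # ps) ((1, w) # ps)) |ps. snd ` set ps \<subseteq> set xs}"
      using sV[of "-1"] unfolding Dform by blast
  qed (use mini in auto)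
  have Dreal: "Bf j D D = complex_of_real (rr j (set xs) w)"
    unfolding rrv by (rule psd_real[OF psd])
  define Fm where "Fm = mat (Suc ?n) (Suc ?n) (\<lambda>(i,k). if i = k then 1 else if k = ?n then - c $ i else (0::complex))"
  have Fmc: "Fm \<in> carrier_mat (Suc ?n) (Suc ?n)" by (simp add: Fm_def)
  have Mc: "?M \<in> carrier_mat (Suc ?n) (Suc ?n)" using Jmat_carrier[of j "xs@[w]"] by simp
  have detF: "det Fm = 1"
  proof -
    have "upper_triangular Fm" by (auto simp: upper_triangular_def Fm_def)
    hence "det Fm = prod_list (diag_mat Fm)" using det_upper_triangular Fmc by blast
    also have "\<dots> = 1" unfolding prod_list_diag_prod by (simp add: Fm_def)
    finally show ?thesis .
  qed
  define G where "G = ?M * Fm"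
  have Gc: "G \<in> carrier_mat (Suc ?n) (Suc ?n)" using Mc Fmc by (simp add: G_def)
  have detG: "det G = det ?M" unfolding G_def det_mult[OF Mc Fmc] detF by simp
  have Gidx: "G $$ (i,k) = (\<Sum>l = 0..<Suc ?n. ?M $$ (i,l) * Fm $$ (l,k))" if "i < Suc ?n" "k < Suc ?n" for i k
    using that Mc Fmc by (simp add: G_def scalar_prod_def)
  have Gk: "G $$ (i,k) = ?M $$ (i,k)" if "i < Suc ?n" "k < ?n" for i k
  proof -
    have "G $$ (i,k) = (\<Sum>l = 0..<Suc ?n. ?M $$ (i,l) * (if l = k then 1 else 0))"
      unfolding Gidx[OF that(1) less_SucI[OF that(2)]] using that
      by (intro sum.cong) (auto simp: Fm_def)
    also have "\<dots> = ?M $$ (i,k)" using that by (simp add: if_distrib cong: if_cong)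
    finally show ?thesis .
  qed
  have Gn: "G $$ (i,?n) = Bf j [(1, (xs@[w])!i)] D" if "i < Suc ?n" for i
  proof -
    have "G $$ (i,?n) = (\<Sum>l = 0..<?n. ?M $$ (i,l) * (- c $ l)) + ?M $$ (i,?n)"
      unfolding Gidx[OF that lessI] by (simp add: Fm_def)
    also have "\<dots> = (\<Sum>l = 0..<?n. - (c $ l * j ((xs@[w])!i - xs!l))) + j ((xs@[w])!i - w)"
      using that by (auto simp: nth_append intro!: sum.cong)
    also have "\<dots> = Bf j [(1, (xs@[w])!i)] D"
      unfolding BD1 V_def Bf_LV by (simp add: sum_negf)
    finally show ?thesis .
  qed
  have Gn0: "G $$ (i,?n) = 0" if "i < ?n" for i
    using Gn[of i] that orth[of "xs!i"] by (simp add: nth_append)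
  have Gnn: "G $$ (?n,?n) = Bf j D D"
    using Gn[of ?n] val by (simp add: W_def)
  have del: "mat_delete G ?n ?n = ?N"
  proof (rule eq_matI)
    show "dim_row (mat_delete G ?n ?n) = dim_row ?N" "dim_col (mat_delete G ?n ?n) = dim_col ?N"
      using Gc by auto
    fix i k assume ik: "i < dim_row ?N" "k < dim_col ?N"
    hence "mat_delete G ?n ?n $$ (i,k) = G $$ (i,k)" using Gc by (simp add: mat_delete_def)
    also have "\<dots> = ?M $$ (i,k)" using ik by (intro Gk) auto
    also have "\<dots> = ?N $$ (i,k)" using ik by (simp add: nth_append)
    finally show "mat_delete G ?n ?n $$ (i,k) = ?N $$ (i,k)" .
  qed
  have "det G = (\<Sum>i<Suc ?n. G $$ (i,?n) * cofactor G i ?n)"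
    by (rule laplace_expansion_column[OF Gc]) simp
  also have "\<dots> = G $$ (?n,?n) * cofactor G ?n ?n"
    by (simp add: Gn0)
  also have "\<dots> = Bf j D D * det ?N"
    unfolding Gnn cofactor_def del by simp
  finally show ?thesis using detG Dreal by (simp add: mult.commute)
qed

lemma det_step:
  assumes "psd j" "herm j"
  shows "det (Jmat j (xs@[w])) = det (Jmat j xs) * complex_of_real (rr j (set xs) w)"
  using det_zero_case[OF assms] det_nonzero_case[OF assms] by (cases "det (Jmat j xs) = 0") auto

lemma det_prod:
  assumes "psd j" "herm j"
  shows "det (Jmat j (xs@ys)) = det (Jmat j xs) *
           complex_of_real (\<Prod>k<length ys. rr j (set xs \<union> set (take k ys)) (ys!k))"
proof (induction ys rule: rev_induct)
  case Nil then show ?case by simp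
next
  case (snoc y ys)
  have p: "(\<Prod>k<length (ys@[y]). rr j (set xs \<union> set (take k (ys@[y]))) ((ys@[y])!k))
      = (\<Prod>k<length ys. rr j (set xs \<union> set (take k ys)) (ys!k)) * rr j (set xs \<union> set ys) y"
  proof -
    have "(\<Prod>k<length ys. rr j (set xs \<union> set (take k (ys@[y]))) ((ys@[y])!k))
        = (\<Prod>k<length ys. rr j (set xs \<union> set (take k ys)) (ys!k))"
      by (rule prod.cong) (auto simp: nth_append)
    thus ?thesis by simp
  qed
  have "det (Jmat j (xs @ ys @ [y])) = det (Jmat j ((xs @ ys) @ [y]))" by simp
  also have "\<dots> = det (Jmat j (xs@ys)) * complex_of_real (rr j (set (xs@ys)) y)"
    by (rule det_step[OF assms])
  finally show ?case unfolding p snoc by simp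
qed

lemma det_Nil[simp]: "det (Jmat j []) = 1"
  by (rule det_dim_zero) (simp add: Jmat_def)

lemma det_Jmat_real:
  assumes "psd j" "herm j"
  shows "det (Jmat j ys) = complex_of_real (\<Prod>k<length ys. rr j (set (take k ys)) (ys!k))"
  using det_prod[OF assms, of "[]" ys] by simp

lemma det_Jmat_perm:
  assumes "mset xs = mset ys"
  shows "det (Jmat j xs) = det (Jmat j ys)"
proof -
  obtain p where p: "p permutes {..<length ys}" "permute_list p ys = xs"
    using mset_eq_permutation[OF assms] by blast
  let ?n = "length ys"
  have len: "length xs = ?n" using assms by (metis size_mset)
  have p': "p permutes {0..<?n}" using p(1) by (simp add: lessThan_atLeast0)
  let ?A = "Jmat j ys"
  define C where "C = mat ?n ?n (\<lambda>(i,k). ?A $$ (p i, k))"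
  have Cc: "C \<in> carrier_mat ?n ?n" by (simp add: C_def)
  have dC: "det C = signof p * det ?A" unfolding C_def by (rule det_permute_rows[OF Jmat_carrier p'])
  have pin: "i < ?n \<Longrightarrow> p i < ?n" for i using permutes_in_image[OF p(1)] by auto
  have X: "Jmat j xs = transpose_mat (mat ?n ?n (\<lambda>(i,k). (transpose_mat C) $$ (p i, k)))"
    by (rule eq_matI) (auto simp: Jmat_def C_def len p(2)[symmetric] permute_list_nth[OF p(1)] pin)
  have "det (Jmat j xs) = det (mat ?n ?n (\<lambda>(i,k). (transpose_mat C) $$ (p i, k)))"
    unfolding X by (rule det_transpose[of _ ?n]) simp
  also have "\<dots> = signof p * det (transpose_mat C)"
    by (rule det_permute_rows[OF _ p']) (use Cc in simp)
  also have "\<dots> = signof p * signof p * det ?A" using det_transpose[OF Cc] dC by simp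
  also have "signof p * signof p = (1::complex)" by (simp add: sign_def)
  finally show ?thesis by simp
qed

lemma detJ_eq: "mset xs = M \<Longrightarrow> detJ j M = det (Jmat j xs)"
  unfolding detJ_def by (metis (mono_tags, lifting) det_Jmat_perm someI_ex)

lemma int_sum_list:
  fixes f :: "'b \<Rightarrow> 'a \<Rightarrow> complex"
  assumes "\<And>x. x \<in> set xs \<Longrightarrow> integrable M (f x)"
  shows "integrable M (\<lambda>t. \<Sum>x\<leftarrow>xs. f x t) \<and> integral\<^sup>L M (\<lambda>t. \<Sum>x\<leftarrow>xs. f x t) = (\<Sum>x\<leftarrow>xs. integral\<^sup>L M (f x))"
  using assms
proof (induction xs)
  case Nil then show ?case by simp
next
  case (Cons a xs)
  hence i1: "integrable M (f a)" and i2: "integrable M (\<lambda>t. \<Sum>x\<leftarrow>xs. f x t)"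
    and e: "integral\<^sup>L M (\<lambda>t. \<Sum>x\<leftarrow>xs. f x t) = (\<Sum>x\<leftarrow>xs. integral\<^sup>L M (f x))" by auto
  show ?case using Bochner_Integration.integral_add[OF i1 i2] e i1 i2 by simp
qed

context
  fixes j :: "'a::euclidean_space \<Rightarrow> complex" and \<rho> :: "'a measure" and \<kappa> :: real
  assumes fm: "finite_measure \<rho>" and sb: "sets \<rho> = sets borel" and k0: "\<kappa> \<ge> 0"
    and jd: "\<And>x. j x = complex_of_real \<kappa> * (LINT t|\<rho>. exp (\<i> * complex_of_real (inner x t)))"
begin

lemma int_e: "integrable \<rho> (\<lambda>t. exp (\<i> * complex_of_real (inner z t)))"
proof (rule finite_measure.integrable_const_bound[OF fm, where B=1])
  show "AE x in \<rho>. norm (exp (\<i> * complex_of_real (inner z x))) \<le> 1"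
    by (simp add: norm_exp_i_times)
  have "(\<lambda>t. exp (\<i> * complex_of_real (inner z t))) \<in> borel_measurable borel"
    by (intro borel_measurable_continuous_onI continuous_intros)
  thus "(\<lambda>t. exp (\<i> * complex_of_real (inner z t))) \<in> borel_measurable \<rho>"
    by (simp only: measurable_cong_sets[OF sb refl])
qed

lemma herm_j: "herm j"
  unfolding herm_def
proof
  fix x
  have "j (-x) = complex_of_real \<kappa> * (LINT t|\<rho>. cnj (exp (\<i> * complex_of_real (inner x t))))"
    unfolding jd by (simp add: exp_cnj)
  also have "\<dots> = cnj (j x)" unfolding jd integral_cnj by simp
  finally show "j (-x) = cnj (j x)" .
qed

lemma Bf_int:
  "Bf j L1 L2 = complex_of_real \<kappa> * (LINT t|\<rho>. (\<Sum>p\<leftarrow>L1. \<Sum>q\<leftarrow>L2. cnj (fst p) * fst q * exp (\<i> * complex_of_real (inner (snd p - snd q) t))))"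
proof -
  let ?g = "\<lambda>p q t. cnj (fst p) * fst q * exp (\<i> * complex_of_real (inner (snd p - snd q) t))"
  have ig: "integrable \<rho> (?g p q)" for p q using int_e by simp
  have inner: "integrable \<rho> (\<lambda>t. \<Sum>q\<leftarrow>L2. ?g p q t) \<and> integral\<^sup>L \<rho> (\<lambda>t. \<Sum>q\<leftarrow>L2. ?g p q t) = (\<Sum>q\<leftarrow>L2. integral\<^sup>L \<rho> (?g p q))" for p
    by (rule int_sum_list) (rule ig)
  have outer: "integral\<^sup>L \<rho> (\<lambda>t. \<Sum>p\<leftarrow>L1. \<Sum>q\<leftarrow>L2. ?g p q t) = (\<Sum>p\<leftarrow>L1. integral\<^sup>L \<rho> (\<lambda>t. \<Sum>q\<leftarrow>L2. ?g p q t))"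
    using int_sum_list[of L1 \<rho> "\<lambda>p t. \<Sum>q\<leftarrow>L2. ?g p q t"] inner by blast
  show ?thesis
    unfolding outer inner[THEN conjunct2] Bf_def jd
    by (simp add: sum_list_const_mult[symmetric] mult_ac)
qed

lemma psd_j: "psd j"
  unfolding psd_def
proof
  fix L :: "(complex \<times> 'a) list"
  define \<phi> where "\<phi> t = (\<Sum>q\<leftarrow>L. fst q * exp (- (\<i> * complex_of_real (inner (snd q) t))))" for t
  have pt: "(\<Sum>p\<leftarrow>L. \<Sum>q\<leftarrow>L. cnj (fst p) * fst q * exp (\<i> * complex_of_real (inner (snd p - snd q) t)))
       = complex_of_real ((cmod (\<phi> t))\<^sup>2)" for t
  proof -
    have "complex_of_real ((cmod (\<phi> t))\<^sup>2) = cnj (\<phi> t) * \<phi> t"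
      using complex_norm_square[of "\<phi> t"] by (simp add: mult.commute)
    also have "\<dots> = (\<Sum>p\<leftarrow>L. \<Sum>q\<leftarrow>L. (cnj (fst p) * exp (\<i> * complex_of_real (inner (snd p) t))) * (fst q * exp (- (\<i> * complex_of_real (inner (snd q) t)))))"
    proof -
      have "cnj (\<phi> t) = (\<Sum>p\<leftarrow>L. cnj (fst p) * exp (\<i> * complex_of_real (inner (snd p) t)))"
        unfolding \<phi>_def cnj_sum_list by (simp add: exp_cnj)
      hence "cnj (\<phi> t) * \<phi> t = (\<Sum>p\<leftarrow>L. (cnj (fst p) * exp (\<i> * complex_of_real (inner (snd p) t))) * \<phi> t)"
        by (simp add: sum_list_mult_const)
      thus ?thesis unfolding \<phi>_def by (simp add: sum_list_const_mult)
    qed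
    also have "\<dots> = (\<Sum>p\<leftarrow>L. \<Sum>q\<leftarrow>L. cnj (fst p) * fst q * exp (\<i> * complex_of_real (inner (snd p - snd q) t)))"
    proof -
      have "exp (\<i> * complex_of_real (inner a t)) * exp (- (\<i> * complex_of_real (inner b t))) = exp (\<i> * complex_of_real (inner (a - b) t))" for a b
        by (simp add: exp_add[symmetric] inner_diff_left algebra_simps)
      thus ?thesis by (simp add: mult_ac)
    qed
    finally show ?thesis by simp
  qed
  have "Bf j L L = complex_of_real (\<kappa> * (LINT t|\<rho>. (cmod (\<phi> t))\<^sup>2))"
    unfolding Bf_int pt integral_complex_of_real of_real_mult by (rule refl)
  moreover have "0 \<le> \<kappa> * (LINT t|\<rho>. (cmod (\<phi> t))\<^sup>2)"
    using k0 by (intro mult_nonneg_nonneg integral_nonneg) auto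
  ultimately show "Bf j L L \<in> \<real> \<and> 0 \<le> Re (Bf j L L)" by simp
qed

end

lemma U_J_ne_minf: "U_J j M \<noteq> -\<infinity>"
  by (simp add: U_J_def)

lemma value_formula:
  assumes psd: "psd j" and hm: "herm j" and a: "mset a = A" and s: "mset s = S" and dS: "detJ j S \<noteq> 0"
  defines "P \<equiv> (\<Prod>k<length a. rr j (set s \<union> set (take k a)) (a!k))"
  shows "U_J j A + W_J j A S = (if P = 0 then \<infinity> else ereal (- ln P))"
proof -
  define P0 where "P0 = (\<Prod>k<length a. rr j (set [] \<union> set (take k a)) (a!k))"
  define ds where "ds = (\<Prod>k<length s. rr j (set (take k s)) (s!k))"
  have P0: "P \<le> P0" unfolding P_def P0_def
    by (intro prod_mono conjI rr_nonneg[OF psd] rr_mono[OF psd]) auto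
  have Pn: "0 \<le> P" unfolding P_def by (intro prod_nonneg rr_nonneg[OF psd])
  have dsn: "0 \<le> ds" unfolding ds_def by (intro prod_nonneg rr_nonneg[OF psd])
  have eS: "detJ j S = complex_of_real ds"
    using detJ_eq[OF s] det_Jmat_real[OF psd hm] ds_def by simp
  hence dsp: "0 < ds" using dS dsn by auto
  have eAS: "detJ j (A + S) = complex_of_real ds * complex_of_real P"
  proof -
    have "mset (s@a) = A + S" using a s by (simp add: add.commute)
    hence "detJ j (A + S) = det (Jmat j (s@a))" by (rule detJ_eq)
    also have "\<dots> = complex_of_real ds * complex_of_real P"
      unfolding det_prod[OF psd hm] P_def using det_Jmat_real[OF psd hm, of s] ds_def by simp
    finally show ?thesis .
  qed
  have eA: "detJ j A = complex_of_real P0"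
  proof -
    have "detJ j A = det (Jmat j ([]@a))" using detJ_eq[OF a] by simp
    also have "\<dots> = complex_of_real P0" unfolding det_prod[OF psd hm] P0_def by simp
    finally show ?thesis .
  qed
  show ?thesis
  proof (cases "P = 0")
    case True
    hence "U_J j (A + S) = \<infinity>" using eAS by (simp add: U_J_def)
    hence "W_J j A S = \<infinity>" by (simp add: W_J_def)
    thus ?thesis using True U_J_ne_minf[of j A] by simp
  next
    case False
    hence Pp: "0 < P" using Pn by simp
    hence P0p: "0 < P0" using P0 by simp
    have u1: "U_J j (A + S) = ereal (- ln (ds * P))"
      using eAS Pp dsp by (simp add: U_J_def norm_mult)
    have u2: "U_J j A = ereal (- ln P0)" using eA P0p by (simp add: U_J_def)
    have u3: "U_J j S = ereal (- ln ds)" using eS dsp by (simp add: U_J_def)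
    have "W_J j A S = ereal (- ln (ds * P) + ln P0 + ln ds)"
      unfolding W_J_def u1 u2 u3 by simp
    hence "U_J j A + W_J j A S = ereal (- ln P)"
      unfolding u2 using Pp dsp by (simp add: ln_mult)
    thus ?thesis using False by simp
  qed
qed

lemma mono_value:
  assumes psd: "psd j" and hm: "herm j" and sub: "S \<subseteq># S'"
    and dS: "detJ j S \<noteq> 0" and dS': "detJ j S' \<noteq> 0"
  shows "U_J j A + W_J j A S \<le> U_J j A + W_J j A S'"
proof -
  obtain a where a: "mset a = A" using ex_mset by blast
  obtain s where s: "mset s = S" using ex_mset by blast
  obtain t where t: "mset t = S' - S" using ex_mset by blast
  have st: "mset (s@t) = S'" using s t sub by simp
  define P where "P = (\<Prod>k<length a. rr j (set s \<union> set (take k a)) (a!k))"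
  define P' where "P' = (\<Prod>k<length a. rr j (set (s@t) \<union> set (take k a)) (a!k))"
  have PP: "P' \<le> P" unfolding P_def P'_def
    by (intro prod_mono conjI rr_nonneg[OF psd] rr_mono[OF psd]) auto
  have Pn: "0 \<le> P'" unfolding P'_def by (intro prod_nonneg rr_nonneg[OF psd])
  show ?thesis
    unfolding value_formula[OF psd hm a s dS] value_formula[OF psd hm a st dS'] P_def[symmetric] P'_def[symmetric]
  proof (cases "P' = 0")
    case False
    hence "0 < P'" using Pn by simp
    hence "ln P' \<le> ln P" using PP by simp
    thus "(if P = 0 then \<infinity> else ereal (- ln P)) \<le> (if P' = 0 then \<infinity> else ereal (- ln P'))"
      using False \<open>0 < P'\<close> PP by auto
  qed simp
qed

lemma restr_config_mono:
  assumes "S \<subseteq> S'" "finite {x\<in>S'. 0 < \<xi> x}"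
  shows "restr_config \<xi> S \<subseteq># restr_config \<xi> S'"
proof -
  let ?X = "{x\<in>S. 0 < \<xi> x}" and ?X' = "{x\<in>S'. 0 < \<xi> x}"
  have "?X \<subseteq> ?X'" using assms(1) by auto
  hence eq: "restr_config \<xi> S' = (\<Sum>x\<in>?X' - ?X. replicate_mset (\<xi> x) x) + restr_config \<xi> S"
    unfolding restr_config_def by (rule sum.subset_diff[OF _ assms(2)])
  show ?thesis unfolding eq by (rule mset_subset_eq_add_right)
qed

lemma mono_tendsto_incr:
  fixes f :: "'a::euclidean_space set \<Rightarrow> ereal"
  assumes L: "bounded \<Lambda>" "\<Lambda> \<in> sets borel"
    and mono: "\<And>D D'. D \<in> {D. bounded D \<and> D \<in> sets borel \<and> \<Lambda> \<subseteq> D} \<Longrightarrow>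
       D' \<in> {D. bounded D \<and> D \<in> sets borel \<and> \<Lambda> \<subseteq> D} \<Longrightarrow> D \<subseteq> D' \<Longrightarrow> f D \<le> f D'"
  shows "(f \<longlongrightarrow> (SUP D\<in>{D. bounded D \<and> D \<in> sets borel \<and> \<Lambda> \<subseteq> D}. f D)) (incr_to_univ \<Lambda>)"
proof -
  let ?I = "{D. bounded D \<and> D \<in> sets borel \<and> \<Lambda> \<subseteq> D}"
  have ev: "eventually (\<lambda>D. D \<in> ?I \<and> D0 \<subseteq> D) (incr_to_univ \<Lambda>)" if "D0 \<in> ?I" for D0
    unfolding incr_to_univ_def
    by (rule eventually_INF1[OF that]) (use that in \<open>auto simp: eventually_principal\<close>)
  have LI: "\<Lambda> \<in> ?I" using L by auto
  show ?thesis
  proof (rule order_tendstoI)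
    fix a assume "a < (SUP D\<in>?I. f D)"
    then obtain D0 where D0: "D0 \<in> ?I" "a < f D0" by (auto simp: less_SUP_iff)
    show "eventually (\<lambda>D. a < f D) (incr_to_univ \<Lambda>)"
      using ev[OF D0(1)]
    proof eventually_elim
      case (elim D)
      hence "f D0 \<le> f D" using mono[OF D0(1)] by blast
      thus ?case using D0(2) by simp
    qed
  next
    fix a assume a: "(SUP D\<in>?I. f D) < a"
    show "eventually (\<lambda>D. f D < a) (incr_to_univ \<Lambda>)"
      using ev[OF LI]
    proof eventually_elim
      case (elim D)
      hence "f D \<le> (SUP D\<in>?I. f D)" by (intro SUP_upper) blast
      thus ?case using a by simp
    qed
  qed
qed

theorem lemma3p2:
  fixes j :: "real^'d \<Rightarrow> complex"
    and \<rho> :: "(real^'d) measure"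
    and \<Lambda> :: "(real^'d) set"
    and \<zeta> :: "(real^'d) set"
    and \<xi> :: "real^'d \<Rightarrow> nat"
  assumes "finite_measure \<rho>" and "sets \<rho> = sets borel"
    and j_def: "\<And>x. j x = complex_of_real ((2 * pi) powr (- real CARD('d))) *
                  (LINT t|\<rho>. exp (\<i> * complex_of_real (x \<bullet> t)))"
    and "integrable lborel j"
    and "bounded \<Lambda>" and "\<Lambda> \<in> sets borel"
    and "finite \<zeta>" and "\<zeta> \<subseteq> \<Lambda>"
    and "\<xi> \<in> possible_bc j \<Lambda>"
  shows "\<exists>L::ereal. ((\<lambda>\<Delta>. U_J j (mset_set \<zeta>) + W_J j (mset_set \<zeta>) (xi_hat j \<Lambda> \<xi> (\<Delta> - \<Lambda>)))
                 \<longlongrightarrow> L) (incr_to_univ \<Lambda>)"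
proof -
  have k0: "0 \<le> (2 * pi) powr (- real CARD('d))" by simp
  have hm: "herm j" by (rule herm_j[OF assms(1,2) k0 j_def])
  have ps: "psd j" by (rule psd_j[OF assms(1,2) k0 j_def])
  have lf: "locally_finite_config \<xi>" and dJ: "\<And>D. bounded D \<Longrightarrow> D \<subseteq> - \<Lambda> \<Longrightarrow> detJ j (xi_hat j \<Lambda> \<xi> D) \<noteq> 0"
    using assms(9) unfolding possible_bc_def by auto
  let ?f = "\<lambda>\<Delta>. U_J j (mset_set \<zeta>) + W_J j (mset_set \<zeta>) (xi_hat j \<Lambda> \<xi> (\<Delta> - \<Lambda>))"
  have "(?f \<longlongrightarrow> (SUP D\<in>{D. bounded D \<and> D \<in> sets borel \<and> \<Lambda> \<subseteq> D}. ?f D)) (incr_to_univ \<Lambda>)"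
  proof (rule mono_tendsto_incr[OF assms(5,6)])
    fix D D' assume D: "D \<in> {D. bounded D \<and> D \<in> sets borel \<and> \<Lambda> \<subseteq> D}"
      and D': "D' \<in> {D. bounded D \<and> D \<in> sets borel \<and> \<Lambda> \<subseteq> D}" and DD: "D \<subseteq> D'"
    have fin: "finite {x \<in> (D' - \<Lambda>) \<inter> boundary_pts j \<Lambda> \<xi>. 0 < \<xi> x}"
    proof (rule finite_subset)
      show "finite {x\<in>D'. 0 < \<xi> x}" using lf D' unfolding locally_finite_config_def by auto
    qed auto
    have sub: "xi_hat j \<Lambda> \<xi> (D - \<Lambda>) \<subseteq># xi_hat j \<Lambda> \<xi> (D' - \<Lambda>)"
      unfolding xi_hat_def by (rule restr_config_mono[OF _ fin]) (use DD in auto)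
    show "?f D \<le> ?f D'"
      by (rule mono_value[OF ps hm sub dJ dJ]) (use D D' in \<open>auto intro: bounded_diff\<close>)
  qed
  thus ?thesis by blast
qed

end
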